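(* Let $(x,q)\in\mathbf J$. Then: (i) for each positive integer $m$ there exists a neighborhood $\mathbf W\subset\mathbb R^2$ of $(x,q)$ such that $a_1(y,r)\ldots a_m(y,r)\ge a_1(x,q)\ldots a_m(x,q)$ (lexicographically) for all $(y,r)\in\mathbf W\cap\mathbf J$; (ii) if $(y_n,r_n)$ is a sequence in $\mathbf J$ converging to $(x,q)$ from below (i.e. $y_n\le x$ and $r_n\le q$ for all $n$), then the sequences $(a_i(y_n,r_n))_{i\ge1}$ converge coordinate-wise to $(a_i(x,q))_{i\ge1}$ as $n\to\infty$.
   Context: For real $q>1$ let $\lceil q\rceil$ be the smallest integer $\ge q$ and $A_q=\{0,\ldots,\lceil q\rceil-1\}$. Let $\mathbf J$ be the set of $(x,q)$ with $q>1$ and $x\in J_q:=[0,(\lceil q\rceil-1)/(q-1)]$ (equivalently, $x=\sum_{i\ge1}c_iq^{-i}$ for some digits $c_i\in A_q$). For $(x,q)\in\mathbf J$, the quasi-greedy expansion $(a_i(x,q))$ is: $0^\infty$ if $x=0$; if $x>0$, recursively $a_n(x,q)$ is the largest element of $A_q$ with $\sum_{i=1}^n a_i(x,q)q^{-i}<x$. Finite words of equal length are compared lexicographically. *)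

theory Defs
  imports "HOL-Analysis.Analysis"
begin

definition JJ :: "(real \<times> real) set" where
  "JJ = {(x, q). q > 1 \<and> 0 \<le> x \<and> x \<le> (real_of_int \<lceil>q\<rceil> - 1) / (q - 1)}"

text \<open>First n digits a_1 ... a_n of the quasi-greedy expansion of x in base q
  (list index k holds a_(k+1)). Digits range over A_q = {0, ..., ceil q - 1}.\<close>
fun qg_prefix :: "real \<Rightarrow> real \<Rightarrow> nat \<Rightarrow> nat list" where
  "qg_prefix x q 0 = []"
| "qg_prefix x q (Suc n) =
     (let w = qg_prefix x q n;
          s = (\<Sum>i<n. real (w ! i) / q ^ (i + 1))
      in w @ [if x = 0 then 0
              else (GREATEST d::nat. real d \<le> real_of_int \<lceil>q\<rceil> - 1 \<and>
                                     s + real d / q ^ (n + 1) < x)])"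

definition qg_digit :: "real \<Rightarrow> real \<Rightarrow> nat \<Rightarrow> nat" where
  "qg_digit x q i = last (qg_prefix x q i)"

end

theory Submission
  imports Defs
begin

definition SS :: "nat list \<Rightarrow> real \<Rightarrow> nat \<Rightarrow> real" where
  "SS w r n = (\<Sum>i<n. real (w ! i) / r ^ (i + 1))"

definition PP :: "real \<Rightarrow> real \<Rightarrow> nat list \<Rightarrow> nat \<Rightarrow> nat \<Rightarrow> bool" where
  "PP x q w n d \<longleftrightarrow> real d \<le> real_of_int \<lceil>q\<rceil> - 1 \<and> SS w q n + real d / q ^ (n + 1) < x"

definition nd :: "real \<Rightarrow> real \<Rightarrow> nat list \<Rightarrow> nat \<Rightarrow> nat" where
  "nd x q w n = (if x = 0 then 0 else (GREATEST d. PP x q w n d))"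

lemma qg_Suc: "qg_prefix x q (Suc n) = qg_prefix x q n @ [nd x q (qg_prefix x q n) n]"
  by (simp add: nd_def PP_def[abs_def] SS_def Let_def)

declare qg_prefix.simps(2)[simp del]

lemma qg_len[simp]: "length (qg_prefix x q n) = n"
  by (induction n) (auto simp: qg_Suc)

lemma SS_snoc: "length w = n \<Longrightarrow> SS (w @ [d]) r (Suc n) = SS w r n + real d / r ^ (Suc n)"
proof -
  assume "length w = n"
  then have "(\<Sum>i<n. real ((w@[d]) ! i) / r ^ (i + 1)) = (\<Sum>i<n. real (w ! i) / r ^ (i + 1))"
    by (intro sum.cong) (auto simp: nth_append)
  then show ?thesis using \<open>length w = n\<close> by (simp add: SS_def nth_append)
qed

lemma SS_nonneg: "r > 0 \<Longrightarrow> 0 \<le> SS w r n"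
  unfolding SS_def by (intro sum_nonneg) auto

lemma SS_mono: "0 < r \<Longrightarrow> r \<le> q \<Longrightarrow> SS w q n \<le> SS w r n"
  unfolding SS_def
  by (intro sum_mono divide_left_mono power_mono mult_pos_pos) auto

lemma PP_bound: "q > 0 \<Longrightarrow> PP x q w n d \<Longrightarrow> d \<le> nat \<lceil>q\<rceil>"
  unfolding PP_def by linarith

lemma nd_PP: "q > 1 \<Longrightarrow> x \<noteq> 0 \<Longrightarrow> PP x q w n k \<Longrightarrow> PP x q w n (nd x q w n) \<and> k \<le> nd x q w n"
  unfolding nd_def using PP_bound[of q x w n]
  by (auto intro: GreatestI_nat Greatest_le_nat)

lemma PP0: "q > 1 \<Longrightarrow> SS w q n < x \<Longrightarrow> PP x q w n 0"
  unfolding PP_def by (simp; linarith)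

lemma qg_inv: "q > 1 \<Longrightarrow> x > 0 \<Longrightarrow> SS (qg_prefix x q n) q n < x \<and>
   (\<forall>i<n. real (qg_prefix x q n ! i) \<le> real_of_int \<lceil>q\<rceil> - 1)"
proof (induction n)
  case 0 then show ?case by (simp add: SS_def)
next
  case (Suc n)
  let ?w = "qg_prefix x q n"
  have "PP x q ?w n (nd x q ?w n)" using nd_PP[OF Suc.prems(1) _ PP0[OF Suc.prems(1)]] Suc by auto
  then show ?case using Suc by (auto simp: qg_Suc SS_snoc PP_def nth_append less_Suc_eq)
qed

lemma qg_nth: "i < n \<Longrightarrow> qg_prefix x q n ! i = last (qg_prefix x q (Suc i))"
proof (induction n)
  case 0 then show ?case by simp
next
  case (Suc n)
  show ?case
  proof (cases "i < n")
    case True then show ?thesis using Suc by (simp add: qg_Suc nth_append)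
  next
    case False then have "i = n" using Suc by simp
    then show ?thesis by (simp add: qg_Suc nth_append)
  qed
qed

lemma map_digits: "map (qg_digit x q) [1..<m+1] = qg_prefix x q m"
  by (rule nth_equalityI) (auto simp: qg_digit_def qg_nth simp del: upt_Suc)

lemma qg_zero: "qg_prefix 0 q n = replicate n 0"
  by (induction n) (auto simp: qg_Suc nd_def replicate_append_same[symmetric])

lemma lex_zero: "length l = m \<Longrightarrow> lexordp_eq (replicate m (0::nat)) l"
  by (induction m arbitrary: l) (auto simp: length_Suc_conv)

lemma lexordp_app: "ord_class.lexordp xs ys \<Longrightarrow> length xs = length (ys::nat list) \<Longrightarrow> ord_class.lexordp (xs @ us) (ys @ vs)"
proof (induction xs arbitrary: ys)
  case Nil then show ?case by simp
next
  case (Cons a xs) then show ?case by (cases ys) auto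
qed

lemma lex_snoc: "c \<le> (d::nat) \<Longrightarrow> lexordp_eq (w @ [c]) (w @ [d])"
  by (induction w) auto

lemma core:
  assumes "r > 1"
  shows "length b = k \<Longrightarrow> (\<forall>i<k. real (b!i) \<le> real_of_int \<lceil>r\<rceil> - 1) \<Longrightarrow> SS b r k < y
     \<Longrightarrow> lexordp_eq b (qg_prefix y r k)"
proof (induction k arbitrary: b)
  case 0 then show ?case by simp
next
  case (Suc k)
  define b' where "b' = take k b"
  define c where "c = b ! k"
  have bdec: "b = b' @ [c]" unfolding b'_def c_def using Suc.prems(1) take_Suc_conv_app_nth[of k b]
    by simp
  have lb: "length b' = k" using Suc.prems(1) by (simp add: b'_def)
  have SSb: "SS b r (Suc k) = SS b' r k + real c / r ^ Suc k" using bdec lb SS_snoc by metis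
  have cpos: "0 \<le> real c / r ^ Suc k" using assms by simp
  have bnd: "\<forall>i<k. real (b'!i) \<le> real_of_int \<lceil>r\<rceil> - 1" using Suc.prems(2) by (simp add: b'_def)
  have IH: "lexordp_eq b' (qg_prefix y r k)" using Suc.IH[OF lb bnd] SSb cpos Suc.prems(3) by linarith
  let ?w = "qg_prefix y r k"
  have pre: "qg_prefix y r (Suc k) = ?w @ [nd y r ?w k]" by (rule qg_Suc)
  show ?case
  proof (cases "b' = ?w")
    case True
    have y0: "y \<noteq> 0" using SS_nonneg[of r b "Suc k"] assms Suc.prems(3) by auto
    have c1: "real c \<le> real_of_int \<lceil>r\<rceil> - 1" using Suc.prems(2) c_def by simp
    have c2: "SS ?w r k + real c / r^(k+1) < y" using SSb True Suc.prems(3) by simp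
    have "PP y r ?w k c" unfolding PP_def using c1 c2 by simp
    then have "c \<le> nd y r ?w k" using nd_PP[OF assms y0] by blast
    then have "lexordp_eq (?w @ [c]) (?w @ [nd y r ?w k])" by (rule lex_snoc)
    then show ?thesis using bdec True pre by simp
  next
    case False
    then have "ord_class.lexordp b' ?w" using IH by (simp add: lexordp_eq_conv_lexord)
    then have "ord_class.lexordp (b' @ [c]) (?w @ [nd y r ?w k])" using lexordp_app lb by simp
    then show ?thesis using bdec pre by (simp add: lexordp_into_lexordp_eq)
  qed
qed

theorem lemma2p3:
  fixes x q :: real
  assumes "(x, q) \<in> JJ"
  shows "(\<forall>m::nat. m \<ge> 1 \<longrightarrow>
            (\<exists>W :: (real \<times> real) set. open W \<and> (x, q) \<in> W \<and>
               (\<forall>y r. (y, r) \<in> W \<inter> JJ \<longrightarrow>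
                   lexordp_eq (map (qg_digit x q) [1..<m+1]) (map (qg_digit y r) [1..<m+1]))))
       \<and> (\<forall>(ys :: nat \<Rightarrow> real) (rs :: nat \<Rightarrow> real).
            (\<forall>n. (ys n, rs n) \<in> JJ \<and> ys n \<le> x \<and> rs n \<le> q) \<and>
            ys \<longlonglongrightarrow> x \<and> rs \<longlonglongrightarrow> q \<longrightarrow>
            (\<forall>i::nat. i \<ge> 1 \<longrightarrow>
               (\<lambda>n. real (qg_digit (ys n) (rs n) i)) \<longlonglongrightarrow> real (qg_digit x q i)))"
proof
  have q1: "q > 1" and x0: "x \<ge> 0" using assms by (auto simp: JJ_def)
  show "\<forall>m::nat. m \<ge> 1 \<longrightarrow>
            (\<exists>W :: (real \<times> real) set. open W \<and> (x, q) \<in> W \<and>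
               (\<forall>y r. (y, r) \<in> W \<inter> JJ \<longrightarrow>
                   lexordp_eq (map (qg_digit x q) [1..<m+1]) (map (qg_digit y r) [1..<m+1])))"
  proof (intro allI impI)
    fix m :: nat
    show "\<exists>W :: (real \<times> real) set. open W \<and> (x, q) \<in> W \<and>
               (\<forall>y r. (y, r) \<in> W \<inter> JJ \<longrightarrow>
                   lexordp_eq (map (qg_digit x q) [1..<m+1]) (map (qg_digit y r) [1..<m+1]))"
    proof (cases "x = 0")
      case True
      show ?thesis
      proof (rule exI[of _ UNIV], intro conjI allI impI)
        fix y r
        show "lexordp_eq (map (qg_digit x q) [1..<m+1]) (map (qg_digit y r) [1..<m+1])"
          unfolding map_digits True qg_zero by (rule lex_zero) simp
      qed auto
    next
      case False
      then have xp: "x > 0" using x0 by simp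
      define a where "a = qg_prefix x q m"
      define T where "T = {p :: real \<times> real. max 1 (real_of_int \<lceil>q\<rceil> - 1) < snd p}"
      define W where "W = T \<inter> (\<lambda>p. fst p - SS a (snd p) m) -` {0<..}"
      have oT: "open T" unfolding T_def by (intro open_Collect_less continuous_intros)
      have cT: "continuous_on T (\<lambda>p. fst p - SS a (snd p) m)"
        unfolding SS_def by (intro continuous_intros) (auto simp: T_def)
      have oW: "open W" unfolding W_def by (rule continuous_open_preimage[OF cT oT]) simp
      have inv: "SS a q m < x" "\<forall>i<m. real (a ! i) \<le> real_of_int \<lceil>q\<rceil> - 1"
        using qg_inv[OF q1 xp, of m] by (auto simp: a_def)
      have inW: "(x, q) \<in> W" unfolding W_def T_def using q1 inv ceiling_correct[of q] by auto
      show ?thesis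
      proof (intro exI conjI allI impI)
        fix y r assume yr: "(y, r) \<in> W \<inter> JJ"
        then have r1: "r > 1" and rq: "real_of_int \<lceil>q\<rceil> - 1 < r" and Sy: "SS a r m < y"
          by (auto simp: W_def T_def)
        have "\<lceil>q\<rceil> \<le> \<lceil>r\<rceil>" using rq by (simp add: le_ceiling_iff)
        then have "\<forall>i<m. real (a ! i) \<le> real_of_int \<lceil>r\<rceil> - 1" using inv(2) by force
        then show "lexordp_eq (map (qg_digit x q) [1..<m+1]) (map (qg_digit y r) [1..<m+1])"
          unfolding map_digits using core[OF r1 _ _ Sy] by (simp add: a_def)
      qed (use oW inW in auto)
    qed
  qed
next
  have q1: "q > 1" and x0: "x \<ge> 0" using assms by (auto simp: JJ_def)
  show "\<forall>(ys :: nat \<Rightarrow> real) (rs :: nat \<Rightarrow> real).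
            (\<forall>n. (ys n, rs n) \<in> JJ \<and> ys n \<le> x \<and> rs n \<le> q) \<and>
            ys \<longlonglongrightarrow> x \<and> rs \<longlonglongrightarrow> q \<longrightarrow>
            (\<forall>i::nat. i \<ge> 1 \<longrightarrow>
               (\<lambda>n. real (qg_digit (ys n) (rs n) i)) \<longlonglongrightarrow> real (qg_digit x q i))"
  proof (intro allI impI)
    fix ys rs :: "nat \<Rightarrow> real" and i :: nat
    assume H: "(\<forall>n. (ys n, rs n) \<in> JJ \<and> ys n \<le> x \<and> rs n \<le> q) \<and> ys \<longlonglongrightarrow> x \<and> rs \<longlonglongrightarrow> q"
    then have J: "\<And>n. rs n > 1" "\<And>n. ys n \<ge> 0" "\<And>n. ys n \<le> x" "\<And>n. rs n \<le> q"
      and ty: "ys \<longlonglongrightarrow> x" and tr: "rs \<longlonglongrightarrow> q" by (auto simp: JJ_def)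
    have ev: "eventually (\<lambda>n. qg_prefix (ys n) (rs n) k = qg_prefix x q k) sequentially" for k
    proof (induction k)
      case 0 then show ?case by simp
    next
      case (Suc k)
      let ?w = "qg_prefix x q k"
      show ?case
      proof (cases "x = 0")
        case True
        then have "ys n = 0" for n using J(2,3)[of n] by linarith
        then show ?thesis using True by (simp add: qg_zero)
      next
        case False
        then have xp: "x > 0" using x0 by simp
        define a where "a = nd x q ?w k"
        have Pa: "PP x q ?w k a" unfolding a_def
          using nd_PP[OF q1 False PP0[OF q1]] qg_inv[OF q1 xp, of k] by blast
        have e1: "eventually (\<lambda>n. ys n > 0) sequentially" using ty xp by (rule order_tendstoD)
        have e2: "eventually (\<lambda>n. rs n > real_of_int \<lceil>q\<rceil> - 1) sequentially"
          using tr ceiling_correct[of q] by (intro order_tendstoD) auto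
        have lim: "(\<lambda>n. ys n - (SS ?w (rs n) k + real a / rs n ^ (k+1))) \<longlonglongrightarrow> x - (SS ?w q k + real a / q ^ (k+1))"
          unfolding SS_def using q1 by (intro tendsto_intros ty tr) auto
        have "x - (SS ?w q k + real a / q ^ (k+1)) > 0" using Pa by (simp add: PP_def)
        from order_tendstoD(1)[OF lim this]
        have e3: "eventually (\<lambda>n. SS ?w (rs n) k + real a / rs n ^ (k+1) < ys n) sequentially" by simp
        have "eventually (\<lambda>n. nd (ys n) (rs n) ?w k = a) sequentially"
        proof (rule eventually_mono[OF eventually_conj[OF e1 eventually_conj[OF e2 e3]]])
          fix n assume A: "0 < ys n \<and> real_of_int \<lceil>q\<rceil> - 1 < rs n \<and> SS ?w (rs n) k + real a / rs n ^ (k+1) < ys n"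
          have yn0: "ys n \<noteq> 0" using A by simp
          have "\<lceil>q\<rceil> \<le> \<lceil>rs n\<rceil>" using A by (simp add: le_ceiling_iff)
          then have Pan: "PP (ys n) (rs n) ?w k a" using A Pa by (auto simp: PP_def)
          then have D: "PP (ys n) (rs n) ?w k (nd (ys n) (rs n) ?w k)" and ge: "a \<le> nd (ys n) (rs n) ?w k"
            using nd_PP[OF J(1) yn0] by blast+
          define d where "d = nd (ys n) (rs n) ?w k"
          have "\<lceil>rs n\<rceil> \<le> \<lceil>q\<rceil>" using J(4) ceiling_mono by blast
          moreover have "SS ?w q k \<le> SS ?w (rs n) k" using SS_mono J(1,4) by (meson less_trans zero_less_one)
          moreover have "real d / q ^ (k+1) \<le> real d / rs n ^ (k+1)"
            using J(1,4)[of n] by (intro divide_left_mono power_mono mult_pos_pos) auto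
          ultimately have "PP x q ?w k d" using D J(3)[of n] unfolding d_def PP_def by linarith
          then have "d \<le> a" unfolding a_def using nd_PP[OF q1 False] by blast
          then show "nd (ys n) (rs n) ?w k = a" using ge d_def by simp
        qed
        then show ?thesis using Suc.IH
          by eventually_elim (simp add: qg_Suc a_def)
      qed
    qed
    assume "1 \<le> i"
    have "eventually (\<lambda>n. real (qg_digit (ys n) (rs n) i) = real (qg_digit x q i)) sequentially"
      using ev[of i] by eventually_elim (simp add: qg_digit_def)
    then show "(\<lambda>n. real (qg_digit (ys n) (rs n) i)) \<longlonglongrightarrow> real (qg_digit x q i)"
      by (rule tendsto_eventually)
  qed
qed

end
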